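(* Consider a tree power network $(\mathcal{V},\mathcal{E})$, $\mathcal{V}=\{1,\dots,n\}$, with angle limits $\underline{\theta}_{ik}\le\overline{\theta}_{ik}$ satisfying $|\underline{\theta}_{ik}|,|\overline{\theta}_{ik}|<90^\circ$, $\underline{\theta}_{ik}\le 0\le\overline{\theta}_{ik}$, and bus power upper bounds $P_i\le\overline{P}_i$ (no lower bounds). Then for every $\tilde{\mathbf{v}}\in\mathbb{R}^n_{>0}$: (a) $\mathcal{O}(\mathcal{P}_\theta(\tilde{\mathbf{v}}))=\mathcal{O}(\overline{\mathrm{conv}}(\mathcal{P}_\theta(\tilde{\mathbf{v}})))$; (b) $\mathcal{O}(\mathcal{P}(\tilde{\mathbf{v}}))=\mathcal{O}(\overline{\mathrm{conv}}(\mathcal{P}_\theta(\tilde{\mathbf{v}}))\cap\mathcal{P}_P)$; and for any $0<\underline{\mathbf{v}}\le\overline{\mathbf{v}}$ in $\mathbb{R}^n$, (c) $\bigcup_{\underline{\mathbf{v}}\le\tilde{\mathbf{v}}\le\overline{\mathbf{v}}}\overline{\mathrm{conv}}(\mathcal{P}_\theta(\tilde{\mathbf{v}}))$ is a convex set.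
   Context: Each line $(i,k)$ has admittance $y_{ik}=g_{ik}-jb_{ik}$, $g_{ik},b_{ik}\ge0$. For fixed voltage magnitudes $|V_i|=\tilde V_i$, the flows on line $(i,k)$ with $\theta_{ik}=\theta_i-\theta_k$ are $P_{ik}=\tilde V_i^2 g_{ik}+\tilde V_i\tilde V_k b_{ik}\sin\theta_{ik}-\tilde V_i\tilde V_k g_{ik}\cos\theta_{ik}$, $P_{ki}=\tilde V_k^2 g_{ik}-\tilde V_i\tilde V_k b_{ik}\sin\theta_{ik}-\tilde V_i\tilde V_k g_{ik}\cos\theta_{ik}$; $\mathcal{F}_{\theta_{ik}}(\tilde{\mathbf{v}})$ is the set of such $(P_{ik},P_{ki})$ for $\theta_{ik}\in[\underline{\theta}_{ik},\overline{\theta}_{ik}]$. $\mathbf{A}$ is the $n\times2|\mathcal{E}|$ matrix with $A(i,(k,l))=1$ if $i=k$ and $0$ otherwise (so $(\mathbf{A}\mathbf{f})_i=\sum_{k\sim i}P_{ik}$). $\mathcal{P}_\theta(\tilde{\mathbf{v}})=\mathbf{A}\prod_{(i,k)\in\mathcal{E}}\mathcal{F}_{\theta_{ik}}(\tilde{\mathbf{v}})$, $\mathcal{P}_P=\{\mathbf{p}:P_i\le\overline{P}_i\ \forall i\}$, $\mathcal{P}(\tilde{\mathbf{v}})=\mathcal{P}_\theta(\tilde{\mathbf{v}})\cap\mathcal{P}_P$. For a Hermitian $n\times n$ matrix $\mathbf{W}$, $W_{ik}$ is its $(i,k)$ entry and $\mathbf{W}_{ik}$ its $2\times2$ submatrix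 on rows/columns $i,k$. Let $\mathcal{H}_{ik}(\tilde{\mathbf{v}})$ be the set of Hermitian $\mathbf{W}$ with $\mathbf{W}_{ik}$ positive semidefinite, $W_{ii}=\tilde V_i^2$, $W_{kk}=\tilde V_k^2$, and $\tan(\underline{\theta}_{ik})\,\mathrm{Re}(W_{ik})\le\mathrm{Im}(W_{ik})\le\tan(\overline{\theta}_{ik})\,\mathrm{Re}(W_{ik})$. With $\mathbf{Y}_{ik}=\begin{bmatrix}y_{ik}&-y_{ik}\\-y_{ik}&y_{ik}\end{bmatrix}$, define $\overline{\mathrm{conv}}(\mathcal{F}_{\theta_{ik}}(\tilde{\mathbf{v}}))=\{\mathrm{Re}(\mathrm{diag}(\mathbf{W}_{ik}\mathbf{Y}_{ik}^H)):\mathbf{W}\in\mathcal{H}_{ik}(\tilde{\mathbf{v}})\}\subset\mathbb{R}^2$ (interpreted as a pair $(P_{ik},P_{ki})$), $\overline{\mathrm{conv}}(\mathcal{F}_\theta(\tilde{\mathbf{v}}))=\prod_{(i,k)}\overline{\mathrm{conv}}(\mathcal{F}_{\theta_{ik}}(\tilde{\mathbf{v}}))$ and $\overline{\mathrm{conv}}(\mathcal{P}_\theta(\tilde{\mathbf{v}}))=\mathbf{A}\,\overline{\mathrm{conv}}(\mathcal{F}_\theta(\tilde{\mathbf{v}}))$. For $\mathcal{A}\subseteq\mathbb{R}^m$, $\mathcal{O}(\mathcal{A})$ is the set of Pareto-optimal points (no $y\in\mathcal{A}$ with $y\le x$ componentwise, strict in some coordinate). *)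

theory Defs
  imports "HOL-Analysis.Analysis"
begin

text \<open>Buses are the elements of a finite type 'v (playing the role of {1..n});
  vectors in R^n are real^'v.  Each line is listed once as an oriented pair (i,k).\<close>

definition tree_network :: "('v::finite \<times> 'v) set \<Rightarrow> bool" where
  "tree_network E \<longleftrightarrow>
     (\<forall>(i,k)\<in>E. i \<noteq> k \<and> (k,i) \<notin> E) \<and>
     (\<forall>i j. (i,j) \<in> (E \<union> E\<inverse>)\<^sup>*) \<and>
     card E + 1 = CARD('v)"

definition line_flow :: "real \<Rightarrow> real \<Rightarrow> real \<Rightarrow> real \<Rightarrow> real \<Rightarrow> real \<times> real" where
  "line_flow g b Vi Vk \<theta> =
     (Vi\<^sup>2 * g + Vi * Vk * b * sin \<theta> - Vi * Vk * g * cos \<theta>,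
      Vk\<^sup>2 * g - Vi * Vk * b * sin \<theta> - Vi * Vk * g * cos \<theta>)"

definition flow_set ::
  "('v \<times> 'v \<Rightarrow> real) \<Rightarrow> ('v \<times> 'v \<Rightarrow> real) \<Rightarrow> ('v \<times> 'v \<Rightarrow> real) \<Rightarrow> ('v \<times> 'v \<Rightarrow> real)
    \<Rightarrow> real^'v::finite \<Rightarrow> 'v \<times> 'v \<Rightarrow> (real \<times> real) set" where
  "flow_set g b lo hi v e =
     {line_flow (g e) (b e) (v $ fst e) (v $ snd e) \<theta> | \<theta>. lo e \<le> \<theta> \<and> \<theta> \<le> hi e}"

definition bus_injection :: "('v::finite \<times> 'v) set \<Rightarrow> ('v \<times> 'v \<Rightarrow> real \<times> real) \<Rightarrow> real^'v" where
  "bus_injection E f =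
     (\<chi> i. (\<Sum>e\<in>E. if fst e = i then fst (f e) else 0)
          + (\<Sum>e\<in>E. if snd e = i then snd (f e) else 0))"

definition A_image :: "('v::finite \<times> 'v) set \<Rightarrow> ('v \<times> 'v \<Rightarrow> (real \<times> real) set) \<Rightarrow> (real^'v) set" where
  "A_image E S = {bus_injection E f | f. \<forall>e\<in>E. f e \<in> S e}"

definition P_theta where
  "P_theta E g b lo hi v = A_image E (flow_set g b lo hi v)"

definition P_P :: "real^'v::finite \<Rightarrow> (real^'v) set" where
  "P_P Pbar = {p. \<forall>i. p $ i \<le> Pbar $ i}"

definition P_set where
  "P_set E g b lo hi Pbar v = P_theta E g b lo hi v \<inter> P_P Pbar"

definition hermitian_mat :: "complex^'v::finite^'v \<Rightarrow> bool" where
  "hermitian_mat W \<longleftrightarrow> (\<forall>i j. W $ i $ j = cnj (W $ j $ i))"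

definition psd_sub :: "complex^'v::finite^'v \<Rightarrow> 'v \<Rightarrow> 'v \<Rightarrow> bool" where
  "psd_sub W i k \<longleftrightarrow> (\<forall>z1 z2::complex.
      cnj z1 * (W $ i $ i * z1 + W $ i $ k * z2) + cnj z2 * (W $ k $ i * z1 + W $ k $ k * z2)
        \<in> \<real> \<and>
      0 \<le> Re (cnj z1 * (W $ i $ i * z1 + W $ i $ k * z2) + cnj z2 * (W $ k $ i * z1 + W $ k $ k * z2)))"

definition H_set :: "real \<Rightarrow> real \<Rightarrow> real^'v::finite \<Rightarrow> 'v \<Rightarrow> 'v \<Rightarrow> (complex^'v^'v) set" where
  "H_set lo hi v i k = {W. hermitian_mat W \<and> psd_sub W i k \<and>
      W $ i $ i = complex_of_real ((v $ i)\<^sup>2) \<and> W $ k $ k = complex_of_real ((v $ k)\<^sup>2) \<and>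
      tan lo * Re (W $ i $ k) \<le> Im (W $ i $ k) \<and> Im (W $ i $ k) \<le> tan hi * Re (W $ i $ k)}"

text \<open>Re(diag(W_ik Y_ik^H)) with Y_ik = [[y,-y],[-y,y]], y = g - j b:
  Y^H = [[cnj y, -cnj y],[-cnj y, cnj y]], so the diagonal of W_ik Y^H is
  ((W_ii - W_ik) cnj y, (W_kk - W_ki) cnj y).\<close>
definition conv_flow_set ::
  "('v \<times> 'v \<Rightarrow> real) \<Rightarrow> ('v \<times> 'v \<Rightarrow> real) \<Rightarrow> ('v \<times> 'v \<Rightarrow> real) \<Rightarrow> ('v \<times> 'v \<Rightarrow> real)
    \<Rightarrow> real^'v::finite \<Rightarrow> 'v \<times> 'v \<Rightarrow> (real \<times> real) set" where
  "conv_flow_set g b lo hi v e =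
     (let i = fst e; k = snd e; y = Complex (g e) (- b e) in
      {(Re ((W $ i $ i - W $ i $ k) * cnj y), Re ((W $ k $ k - W $ k $ i) * cnj y)) | W.
         W \<in> H_set (lo e) (hi e) v i k})"

definition conv_P_theta where
  "conv_P_theta E g b lo hi v = A_image E (conv_flow_set g b lo hi v)"

definition pareto :: "(real^'v::finite) set \<Rightarrow> (real^'v) set" where
  "pareto S = {x \<in> S. \<not> (\<exists>y\<in>S. (\<forall>i. y $ i \<le> x $ i) \<and> (\<exists>i. y $ i < x $ i))}"

end

theory Submission
  imports Defs
begin





lemma pareto_eq:
  fixes S T :: "(real^'v::finite) set"
  assumes "S \<subseteq> T" and dom: "\<forall>y\<in>T. \<exists>z\<in>S. \<forall>i. z $ i \<le> y $ i"
  shows "pareto S = pareto T"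
proof
  show "pareto S \<subseteq> pareto T"
  proof
    fix x assume x: "x \<in> pareto S"
    hence xS: "x \<in> S" and nd: "\<not> (\<exists>y\<in>S. (\<forall>i. y $ i \<le> x $ i) \<and> (\<exists>i. y $ i < x $ i))"
      by (auto simp: pareto_def)
    have "\<not> (\<exists>y\<in>T. (\<forall>i. y $ i \<le> x $ i) \<and> (\<exists>i. y $ i < x $ i))"
    proof
      assume "\<exists>y\<in>T. (\<forall>i. y $ i \<le> x $ i) \<and> (\<exists>i. y $ i < x $ i)"
      then obtain y j where y: "y \<in> T" "\<forall>i. y $ i \<le> x $ i" "y $ j < x $ j" by blast
      then obtain z where "z \<in> S" "\<forall>i. z $ i \<le> y $ i" using dom by blast
      with y nd show False by (meson order_trans le_less_trans)
    qed
    thus "x \<in> pareto T" using xS assms(1) by (auto simp: pareto_def)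
  qed
next
  show "pareto T \<subseteq> pareto S"
  proof
    fix x assume x: "x \<in> pareto T"
    hence xT: "x \<in> T" and nd: "\<not> (\<exists>y\<in>T. (\<forall>i. y $ i \<le> x $ i) \<and> (\<exists>i. y $ i < x $ i))"
      by (auto simp: pareto_def)
    obtain z where z: "z \<in> S" "\<forall>i. z $ i \<le> x $ i" using dom xT by blast
    have "z = x"
    proof (rule ccontr)
      assume "z \<noteq> x"
      then obtain j where "z $ j \<noteq> x $ j" by (metis vec_eq_iff)
      with z have "z $ j < x $ j" by (meson order.not_eq_order_implies_strict)
      with z nd assms(1) show False by blast
    qed
    with z nd assms(1) show "x \<in> pareto S" by (auto simp: pareto_def)
  qed
qed

lemma psd_bound:
  fixes W :: "complex^'v::finite^'v"
  assumes h: "hermitian_mat W" and p: "psd_sub W i k"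
    and di: "W $ i $ i = complex_of_real (Vi\<^sup>2)" and dk: "W $ k $ k = complex_of_real (Vk\<^sup>2)"
    and Vk: "0 < Vk"
  shows "(Re (W $ i $ k))\<^sup>2 + (Im (W $ i $ k))\<^sup>2 \<le> (Vi * Vk)\<^sup>2"
proof -
  define w where "w = W $ i $ k"
  have wki: "W $ k $ i = cnj w" using h unfolding hermitian_mat_def w_def by (metis complex_cnj_cnj)
  define z1 :: complex where "z1 = of_real Vk"
  define z2 :: complex where "z2 = - cnj w / of_real Vk"
  have "0 \<le> Re (cnj z1 * (W $ i $ i * z1 + W $ i $ k * z2) + cnj z2 * (W $ k $ i * z1 + W $ k $ k * z2))"
    using p unfolding psd_sub_def by blast
  also have "cnj z1 * (W $ i $ i * z1 + W $ i $ k * z2) + cnj z2 * (W $ k $ i * z1 + W $ k $ k * z2)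
     = of_real ((Vi*Vk)\<^sup>2) - w * cnj w"
    using Vk unfolding z1_def z2_def di dk wki w_def[symmetric]
    by (simp add: field_simps power2_eq_square)
  finally show ?thesis unfolding w_def[symmetric]
    by (simp add: complex_mult_cnj power2_eq_square)
qed



lemma sq_id: fixes x y a c :: real shows "(x * c + y * a)\<^sup>2 + (x * a - y * c)\<^sup>2 = x\<^sup>2 * a\<^sup>2 + x\<^sup>2 * c\<^sup>2 + (y\<^sup>2 * a\<^sup>2 + y\<^sup>2 * c\<^sup>2)"
    by (simp add: power2_eq_square algebra_simps)

lemma lin_id: fixes x y a c :: real shows "x * a * c + y * a\<^sup>2 = a * (x * c + y * a)"
    by (simp add: power2_eq_square algebra_simps)

lemma ang_bound:
  fixes x y R h :: real
  assumes "y \<le> tan h * x" "0 \<le> h" "h < pi/2" "x\<^sup>2 + y\<^sup>2 \<le> R\<^sup>2" "0 < R"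
  shows "y \<le> R * sin h"
proof -
  have c: "0 < cos h" using assms by (intro cos_gt_zero_pi) auto
  have s: "0 \<le> sin h" using assms by (intro sin_ge_zero) auto
  have "y * cos h \<le> tan h * x * cos h" using assms(1) c by (simp add: mult_right_mono)
  hence yc: "y * cos h \<le> x * sin h" using c by (simp add: tan_def mult.commute)
  have eq: "(x * cos h + y * sin h)\<^sup>2 + (x * sin h - y * cos h)\<^sup>2 = x\<^sup>2 * (sin h)\<^sup>2 + x\<^sup>2 * (cos h)\<^sup>2 + (y\<^sup>2 * (sin h)\<^sup>2 + y\<^sup>2 * (cos h)\<^sup>2)"
    by (rule sq_id)
  also have "\<dots> = x\<^sup>2 * ((sin h)\<^sup>2 + (cos h)\<^sup>2) + y\<^sup>2 * ((sin h)\<^sup>2 + (cos h)\<^sup>2)"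
    by (simp only: distrib_left)
  also have "\<dots> = x\<^sup>2 + y\<^sup>2" by simp
  finally have eq2: "(x * cos h + y * sin h)\<^sup>2 + (x * sin h - y * cos h)\<^sup>2 = x\<^sup>2 + y\<^sup>2" .
  have "0 \<le> (x * sin h - y * cos h)\<^sup>2" by simp
  hence "(x * cos h + y * sin h)\<^sup>2 \<le> x\<^sup>2 + y\<^sup>2" using eq2 by linarith
  hence "(x * cos h + y * sin h)\<^sup>2 \<le> R\<^sup>2" using assms(4) by linarith
  hence q: "x * cos h + y * sin h \<le> R" by (rule power2_le_imp_le[OF _ less_imp_le[OF assms(5)]])
  have "y = y * ((cos h)\<^sup>2 + (sin h)\<^sup>2)" by simp
  also have "\<dots> = y * (cos h)\<^sup>2 + y * (sin h)\<^sup>2" by (simp only: distrib_left)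
  also have "\<dots> \<le> x * sin h * cos h + y * (sin h)\<^sup>2"
  proof -
    have "y * cos h * cos h \<le> x * sin h * cos h" using mult_right_mono[OF yc less_imp_le[OF c]] .
    moreover have "y * (cos h)\<^sup>2 = y * cos h * cos h" by (simp only: power2_eq_square mult.assoc)
    ultimately show ?thesis by linarith
  qed
  also have "\<dots> = sin h * (x * cos h + y * sin h)" by (rule lin_id)
  also have "\<dots> \<le> sin h * R" using q s by (rule mult_left_mono)
  finally show ?thesis by (simp add: mult.commute)
qed

lemma dominate_line:
  fixes g b Vi Vk lo hi :: real and w :: complex
  assumes g: "0 \<le> g" and ang: "- (pi/2) < lo" "lo \<le> 0" "0 \<le> hi" "hi < pi/2"
    and Vi: "0 < Vi" and Vk: "0 < Vk"
    and disk: "(Re w)\<^sup>2 + (Im w)\<^sup>2 \<le> (Vi * Vk)\<^sup>2"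
    and c1: "tan lo * Re w \<le> Im w" and c2: "Im w \<le> tan hi * Re w"
  shows "\<exists>\<theta>. lo \<le> \<theta> \<and> \<theta> \<le> hi \<and>
     fst (line_flow g b Vi Vk \<theta>) \<le> Re ((complex_of_real (Vi\<^sup>2) - w) * cnj (Complex g (- b))) \<and>
     snd (line_flow g b Vi Vk \<theta>) \<le> Re ((complex_of_real (Vk\<^sup>2) - cnj w) * cnj (Complex g (- b)))"
proof -
  define R where "R = Vi * Vk"
  have R: "0 < R" using Vi Vk by (simp add: R_def)
  define x where "x = Re w"
  define y where "y = Im w"
  have d: "x\<^sup>2 + y\<^sup>2 \<le> R\<^sup>2" using disk by (simp add: x_def y_def R_def)
  have up: "y \<le> R * sin hi" using ang_bound[OF c2[folded x_def y_def] ang(3,4) d R] .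
  have "- y \<le> R * sin (- lo)"
    using ang_bound[of "-y" "-lo" x R] c1 ang d R by (simp add: x_def y_def)
  hence lw: "R * sin lo \<le> y" by simp
  have yR: "y / R \<le> sin hi" "sin lo \<le> y / R" using up lw R by (simp_all add: field_simps)
  have sb: "-1 \<le> sin lo" "sin hi \<le> 1" by simp_all
  define \<theta> where "\<theta> = arcsin (y / R)"
  have yb: "-1 \<le> y / R" "y / R \<le> 1" using yR sb by linarith+
  have "lo = arcsin (sin lo)" using ang by (intro arcsin_sin[symmetric]) auto
  also have "\<dots> \<le> \<theta>" unfolding \<theta>_def using yR yb by (intro arcsin_le_arcsin) auto
  finally have t1: "lo \<le> \<theta>" .
  have "\<theta> \<le> arcsin (sin hi)" unfolding \<theta>_def using yR yb by (intro arcsin_le_arcsin) auto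
  also have "\<dots> = hi" using ang by (intro arcsin_sin) auto
  finally have t2: "\<theta> \<le> hi" .
  have sth: "R * sin \<theta> = y" unfolding \<theta>_def using yb R by simp
  have cth: "cos \<theta> = sqrt (1 - (y/R)\<^sup>2)" unfolding \<theta>_def using yb by (simp add: cos_arcsin)
  have "x \<le> R * cos \<theta>"
  proof -
    have "x \<le> sqrt (R\<^sup>2 - y\<^sup>2)"
      using d by (intro real_le_rsqrt) simp
    also have "sqrt (R\<^sup>2 - y\<^sup>2) = R * sqrt (1 - (y/R)\<^sup>2)"
    proof -
      have "R\<^sup>2 - y\<^sup>2 = R\<^sup>2 * (1 - (y/R)\<^sup>2)" using R by (simp add: field_simps power2_eq_square)
      thus ?thesis using R by (simp add: real_sqrt_mult)
    qed
    finally show ?thesis using cth by simp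
  qed
  hence gx: "g * x \<le> g * (R * cos \<theta>)" using g by (rule mult_left_mono)
  have sth2: "Vi * (Vk * (b * sin \<theta>)) = b * Im w"
  proof -
    have "Vi * (Vk * (b * sin \<theta>)) = b * (R * sin \<theta>)" by (simp add: R_def algebra_simps)
    thus ?thesis using sth by (simp add: y_def)
  qed
  have gx': "g * Re w \<le> Vi * (Vk * (g * cos \<theta>))" using gx by (simp add: x_def R_def algebra_simps)
  show ?thesis
  proof (intro exI conjI)
    show "lo \<le> \<theta>" "\<theta> \<le> hi" by fact+
    show "fst (line_flow g b Vi Vk \<theta>) \<le> Re ((complex_of_real (Vi\<^sup>2) - w) * cnj (Complex g (- b)))"
      apply (simp add: line_flow_def algebra_simps)
      using gx' sth2 by linarith
    show "snd (line_flow g b Vi Vk \<theta>) \<le> Re ((complex_of_real (Vk\<^sup>2) - cnj w) * cnj (Complex g (- b)))"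
      apply (simp add: line_flow_def algebra_simps)
      using gx' sth2 by linarith
  qed
qed




lemma cmul_id: fixes a c s :: real
  shows "Complex (a * c) (a * s) * cnj (Complex (a * c) (a * s)) = Complex (a\<^sup>2 * (c\<^sup>2 + s\<^sup>2)) 0"
  by (simp add: complex_eq_iff power2_eq_square algebra_simps)

lemma flow_in_conv:
  fixes v :: "real^'v::finite" and i k :: 'v
  assumes ik: "i \<noteq> k" and pos: "0 \<le> v $ i" "0 \<le> v $ k" and ang: "- (pi/2) < lo" "lo \<le> \<theta>" "\<theta> \<le> hi" "hi < pi/2"
  shows "\<exists>W. W \<in> H_set lo hi v i k \<and>
     line_flow g b (v$i) (v$k) \<theta> = (Re ((W $ i $ i - W $ i $ k) * cnj (Complex g (- b))),
                                  Re ((W $ k $ k - W $ k $ i) * cnj (Complex g (- b))))"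
proof -
  define Vi where "Vi = v $ i"
  define Vk where "Vk = v $ k"
  define u :: "'v \<Rightarrow> complex" where
    "u a = (if a = i then Complex (Vi * cos \<theta>) (Vi * sin \<theta>) else if a = k then complex_of_real Vk else 0)" for a
  define W :: "complex^'v^'v" where "W = (\<chi> a c. u a * cnj (u c))"
  have Wc: "W $ a $ c = u a * cnj (u c)" for a c by (simp add: W_def)
  have cs: "(cos \<theta>)\<^sup>2 + (sin \<theta>)\<^sup>2 = 1" by simp
  have uii: "u i * cnj (u i) = complex_of_real (Vi\<^sup>2)"
  proof -
    have "u i * cnj (u i) = Complex (Vi\<^sup>2 * ((cos \<theta>)\<^sup>2 + (sin \<theta>)\<^sup>2)) 0"
      by (simp add: u_def cmul_id)
    thus ?thesis using cs by (simp add: complex_of_real_def)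
  qed
  have ukk: "u k * cnj (u k) = complex_of_real (Vk\<^sup>2)" using ik by (simp add: u_def power2_eq_square)
  have uik: "u i * cnj (u k) = Complex (Vi * Vk * cos \<theta>) (Vi * Vk * sin \<theta>)"
    using ik by (simp add: u_def complex_eq_iff)
  have uki: "u k * cnj (u i) = Complex (Vi * Vk * cos \<theta>) (- (Vi * Vk * sin \<theta>))"
    using ik by (simp add: u_def complex_eq_iff)
  have herm: "hermitian_mat W" unfolding hermitian_mat_def Wc by simp
  have psd: "psd_sub W i k"
    unfolding psd_sub_def
  proof (intro allI conjI)
    fix z1 z2 :: complex
    define s where "s = cnj (u i) * z1 + cnj (u k) * z2"
    have e: "cnj z1 * (W $ i $ i * z1 + W $ i $ k * z2) + cnj z2 * (W $ k $ i * z1 + W $ k $ k * z2)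
        = cnj s * s" unfolding Wc s_def by (simp add: algebra_simps)
    show "cnj z1 * (W $ i $ i * z1 + W $ i $ k * z2) + cnj z2 * (W $ k $ i * z1 + W $ k $ k * z2) \<in> \<real>"
      unfolding e by (simp add: complex_is_Real_iff)
    show "0 \<le> Re (cnj z1 * (W $ i $ i * z1 + W $ i $ k * z2) + cnj z2 * (W $ k $ i * z1 + W $ k $ k * z2))"
      unfolding e by simp
  qed
  have c: "0 < cos \<theta>" using ang by (intro cos_gt_zero_pi) auto
  have tl: "tan lo \<le> tan \<theta>" using ang by (intro tan_mono_le) auto
  have th: "tan \<theta> \<le> tan hi" using ang by (intro tan_mono_le) auto
  have tc: "tan \<theta> * cos \<theta> = sin \<theta>" using c by (simp add: tan_def)
  have VV: "0 \<le> Vi * Vk" using pos by (simp add: Vi_def Vk_def)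
  have "tan lo * cos \<theta> \<le> sin \<theta>" using mult_right_mono[OF tl less_imp_le[OF c]] tc by simp
  hence "Vi * Vk * (tan lo * cos \<theta>) \<le> Vi * Vk * sin \<theta>" using VV by (rule mult_left_mono)
  then have cone1: "tan lo * (Vi * Vk * cos \<theta>) \<le> Vi * Vk * sin \<theta>" by (simp add: algebra_simps)
  have "sin \<theta> \<le> tan hi * cos \<theta>" using mult_right_mono[OF th less_imp_le[OF c]] tc by simp
  hence "Vi * Vk * sin \<theta> \<le> Vi * Vk * (tan hi * cos \<theta>)" using VV by (rule mult_left_mono)
  then have cone2: "Vi * Vk * sin \<theta> \<le> tan hi * (Vi * Vk * cos \<theta>)" by (simp add: algebra_simps)
  show ?thesis
  proof (intro exI conjI)
    show "W \<in> H_set lo hi v i k"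
      unfolding H_set_def using herm psd cone1 cone2 uii ukk uik
      by (simp add: Wc Vi_def Vk_def)
    show "line_flow g b (v$i) (v$k) \<theta> = (Re ((W $ i $ i - W $ i $ k) * cnj (Complex g (- b))),
                                  Re ((W $ k $ k - W $ k $ i) * cnj (Complex g (- b))))"
      unfolding Wc uii ukk uik uki line_flow_def Vi_def[symmetric] Vk_def[symmetric]
      by (simp add: algebra_simps)
  qed
qed




lemma H_comb:
  fixes W1 W2 :: "complex^'v::finite^'v" and v1 v2 vn :: "real^'v"
  assumes W1: "W1 \<in> H_set lo hi v1 i k" and W2: "W2 \<in> H_set lo hi v2 i k"
    and a: "0 \<le> a" and c: "0 \<le> c"
    and ni: "(vn $ i)\<^sup>2 = a * (v1 $ i)\<^sup>2 + c * (v2 $ i)\<^sup>2"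
    and nk: "(vn $ k)\<^sup>2 = a * (v1 $ k)\<^sup>2 + c * (v2 $ k)\<^sup>2"
  defines "W \<equiv> (\<chi> p q. of_real a * W1 $ p $ q + of_real c * W2 $ p $ q)"
  shows "W \<in> H_set lo hi vn i k"
    and "Re ((W $ i $ i - W $ i $ k) * y) = a * Re ((W1 $ i $ i - W1 $ i $ k) * y) + c * Re ((W2 $ i $ i - W2 $ i $ k) * y)"
    and "Re ((W $ k $ k - W $ k $ i) * y) = a * Re ((W1 $ k $ k - W1 $ k $ i) * y) + c * Re ((W2 $ k $ k - W2 $ k $ i) * y)"
proof -
  have Wc: "W $ p $ q = of_real a * W1 $ p $ q + of_real c * W2 $ p $ q" for p q by (simp add: W_def)
  from W1 have h1: "hermitian_mat W1" "psd_sub W1 i k" "W1 $ i $ i = complex_of_real ((v1 $ i)\<^sup>2)"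
    "W1 $ k $ k = complex_of_real ((v1 $ k)\<^sup>2)"
    "tan lo * Re (W1 $ i $ k) \<le> Im (W1 $ i $ k)" "Im (W1 $ i $ k) \<le> tan hi * Re (W1 $ i $ k)"
    by (auto simp: H_set_def)
  from W2 have h2: "hermitian_mat W2" "psd_sub W2 i k" "W2 $ i $ i = complex_of_real ((v2 $ i)\<^sup>2)"
    "W2 $ k $ k = complex_of_real ((v2 $ k)\<^sup>2)"
    "tan lo * Re (W2 $ i $ k) \<le> Im (W2 $ i $ k)" "Im (W2 $ i $ k) \<le> tan hi * Re (W2 $ i $ k)"
    by (auto simp: H_set_def)
  have herm: "hermitian_mat W" unfolding hermitian_mat_def
  proof (intro allI)
    fix p q
    have "W1 $ p $ q = cnj (W1 $ q $ p)" "W2 $ p $ q = cnj (W2 $ q $ p)"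
      using h1(1) h2(1) unfolding hermitian_mat_def by blast+
    thus "W $ p $ q = cnj (W $ q $ p)" unfolding Wc by simp
  qed
  have psd: "psd_sub W i k"
    unfolding psd_sub_def
  proof (intro allI)
    fix z1 z2 :: complex
    define Q where "Q M = cnj z1 * (M $ i $ i * z1 + M $ i $ k * z2) + cnj z2 * (M $ k $ i * z1 + M $ k $ k * z2)" for M :: "complex^'v^'v"
    have q1: "Q W1 \<in> \<real>" "0 \<le> Re (Q W1)" using h1(2) unfolding psd_sub_def Q_def by blast+
    have q2: "Q W2 \<in> \<real>" "0 \<le> Re (Q W2)" using h2(2) unfolding psd_sub_def Q_def by blast+
    have e: "Q W = of_real a * Q W1 + of_real c * Q W2" unfolding Q_def Wc by (simp add: algebra_simps)
    have "Q W \<in> \<real>" unfolding e using q1 q2 by (auto intro: Reals_add Reals_mult)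
    moreover have "0 \<le> Re (Q W)" unfolding e using q1 q2 a c by simp
    ultimately show "Q W \<in> \<real> \<and> 0 \<le> Re (Q W)" by blast
  qed
  have d1: "W $ i $ i = complex_of_real ((vn $ i)\<^sup>2)" unfolding Wc h1(3) h2(3) ni by simp
  have d2: "W $ k $ k = complex_of_real ((vn $ k)\<^sup>2)" unfolding Wc h1(4) h2(4) nk by simp
  have ReW: "Re (W $ i $ k) = a * Re (W1 $ i $ k) + c * Re (W2 $ i $ k)" unfolding Wc by simp
  have ImW: "Im (W $ i $ k) = a * Im (W1 $ i $ k) + c * Im (W2 $ i $ k)" unfolding Wc by simp
  have "a * (tan lo * Re (W1 $ i $ k)) \<le> a * Im (W1 $ i $ k)" using h1(5) a by (rule mult_left_mono)
  moreover have "c * (tan lo * Re (W2 $ i $ k)) \<le> c * Im (W2 $ i $ k)" using h2(5) c by (rule mult_left_mono)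
  ultimately have cone1: "tan lo * Re (W $ i $ k) \<le> Im (W $ i $ k)" unfolding ReW ImW by (simp add: algebra_simps)
  have "a * Im (W1 $ i $ k) \<le> a * (tan hi * Re (W1 $ i $ k))" using h1(6) a by (rule mult_left_mono)
  moreover have "c * Im (W2 $ i $ k) \<le> c * (tan hi * Re (W2 $ i $ k))" using h2(6) c by (rule mult_left_mono)
  ultimately have cone2: "Im (W $ i $ k) \<le> tan hi * Re (W $ i $ k)" unfolding ReW ImW by (simp add: algebra_simps)
  show "W \<in> H_set lo hi vn i k" unfolding H_set_def using herm psd d1 d2 cone1 cone2 by blast
  show "Re ((W $ i $ i - W $ i $ k) * y) = a * Re ((W1 $ i $ i - W1 $ i $ k) * y) + c * Re ((W2 $ i $ i - W2 $ i $ k) * y)"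
    unfolding Wc by (simp add: algebra_simps)
  show "Re ((W $ k $ k - W $ k $ i) * y) = a * Re ((W1 $ k $ k - W1 $ k $ i) * y) + c * Re ((W2 $ k $ k - W2 $ k $ i) * y)"
    unfolding Wc by (simp add: algebra_simps)
qed





lemma dom_flow:
  fixes v :: "real^'v::finite"
  assumes g: "0 \<le> g e" and ang: "- (pi/2) < lo e" "lo e \<le> 0" "0 \<le> hi e" "hi e < pi/2"
    and pos: "\<forall>i. 0 < v $ i"
    and p: "p \<in> conv_flow_set g b lo hi v e"
  shows "\<exists>q\<in>flow_set g b lo hi v e. fst q \<le> fst p \<and> snd q \<le> snd p"
proof -
  obtain i k where e: "e = (i, k)" by (cases e)
  from p obtain W where W: "W \<in> H_set (lo e) (hi e) v i k"
    and pe: "p = (Re ((W $ i $ i - W $ i $ k) * cnj (Complex (g e) (- b e))),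
                 Re ((W $ k $ k - W $ k $ i) * cnj (Complex (g e) (- b e))))"
    unfolding conv_flow_set_def e Let_def by auto
  from W have h: "hermitian_mat W" "psd_sub W i k" "W $ i $ i = complex_of_real ((v $ i)\<^sup>2)"
    "W $ k $ k = complex_of_real ((v $ k)\<^sup>2)"
    "tan (lo e) * Re (W $ i $ k) \<le> Im (W $ i $ k)" "Im (W $ i $ k) \<le> tan (hi e) * Re (W $ i $ k)"
    by (auto simp: H_set_def)
  have ki: "W $ k $ i = cnj (W $ i $ k)" using h(1) unfolding hermitian_mat_def by (metis complex_cnj_cnj)
  have disk: "(Re (W $ i $ k))\<^sup>2 + (Im (W $ i $ k))\<^sup>2 \<le> (v $ i * v $ k)\<^sup>2"
    using psd_bound[OF h(1,2,3,4)] pos by blast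
  obtain \<theta> where th: "lo e \<le> \<theta>" "\<theta> \<le> hi e"
    "fst (line_flow (g e) (b e) (v $ i) (v $ k) \<theta>) \<le> Re ((complex_of_real ((v $ i)\<^sup>2) - W $ i $ k) * cnj (Complex (g e) (- b e)))"
    "snd (line_flow (g e) (b e) (v $ i) (v $ k) \<theta>) \<le> Re ((complex_of_real ((v $ k)\<^sup>2) - cnj (W $ i $ k)) * cnj (Complex (g e) (- b e)))"
    using dominate_line[OF g ang _ _ disk h(5,6)] pos by blast
  show ?thesis
  proof (rule bexI[of _ "line_flow (g e) (b e) (v $ i) (v $ k) \<theta>"])
    show "line_flow (g e) (b e) (v $ i) (v $ k) \<theta> \<in> flow_set g b lo hi v e"
      unfolding flow_set_def e using th(1,2) e by auto
    show "fst (line_flow (g e) (b e) (v $ i) (v $ k) \<theta>) \<le> fst p \<and> snd (line_flow (g e) (b e) (v $ i) (v $ k) \<theta>) \<le> snd p"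
      using th(3,4) unfolding pe h(3,4) ki by simp
  qed
qed

lemma sub_flow:
  fixes v :: "real^'v::finite"
  assumes ne: "fst e \<noteq> snd e" and ang: "- (pi/2) < lo e" "hi e < pi/2"
    and pos: "\<forall>i. 0 < v $ i"
  shows "flow_set g b lo hi v e \<subseteq> conv_flow_set g b lo hi v e"
proof
  fix q assume "q \<in> flow_set g b lo hi v e"
  then obtain \<theta> where th: "lo e \<le> \<theta>" "\<theta> \<le> hi e"
    and q: "q = line_flow (g e) (b e) (v $ fst e) (v $ snd e) \<theta>"
    unfolding flow_set_def by auto
  obtain W where "W \<in> H_set (lo e) (hi e) v (fst e) (snd e)"
    "line_flow (g e) (b e) (v $ fst e) (v $ snd e) \<theta> =
       (Re ((W $ fst e $ fst e - W $ fst e $ snd e) * cnj (Complex (g e) (- b e))),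
        Re ((W $ snd e $ snd e - W $ snd e $ fst e) * cnj (Complex (g e) (- b e))))"
    using flow_in_conv[OF ne _ _ ang(1) th ang(2), of v "g e" "b e"] pos less_imp_le by blast
  thus "q \<in> conv_flow_set g b lo hi v e"
    unfolding conv_flow_set_def Let_def q by blast
qed

lemma bus_mono:
  assumes "\<forall>e\<in>E. fst (f e) \<le> fst (f' e) \<and> snd (f e) \<le> snd (f' e)"
  shows "bus_injection E f $ i \<le> bus_injection E f' $ i"
  unfolding bus_injection_def using assms
  by (auto intro!: add_mono sum_mono)


theorem lemma4:
  fixes E :: "('v::finite \<times> 'v) set"
    and g b lo hi :: "'v \<times> 'v \<Rightarrow> real"
    and Pbar :: "real^'v"
  assumes tree: "tree_network E"
    and adm: "\<forall>e\<in>E. 0 \<le> g e \<and> 0 \<le> b e"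
    and ang: "\<forall>e\<in>E. - (pi/2) < lo e \<and> lo e \<le> 0 \<and> 0 \<le> hi e \<and> hi e < pi/2"
  shows "(\<forall>v::real^'v. (\<forall>i. 0 < v $ i) \<longrightarrow>
            pareto (P_theta E g b lo hi v) = pareto (conv_P_theta E g b lo hi v) \<and>
            pareto (P_set E g b lo hi Pbar v) = pareto (conv_P_theta E g b lo hi v \<inter> P_P Pbar))
       \<and> (\<forall>vlo vhi :: real^'v. (\<forall>i. 0 < vlo $ i \<and> vlo $ i \<le> vhi $ i) \<longrightarrow>
            convex (\<Union>v \<in> {v. \<forall>i. vlo $ i \<le> v $ i \<and> v $ i \<le> vhi $ i}. conv_P_theta E g b lo hi v))"
proof (intro conjI allI impI)
  have ne: "\<forall>e\<in>E. fst e \<noteq> snd e" using tree unfolding tree_network_def by auto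
  fix v :: "real^'v" assume pos: "\<forall>i. 0 < v $ i"
  have sub: "P_theta E g b lo hi v \<subseteq> conv_P_theta E g b lo hi v"
  proof
    fix x assume "x \<in> P_theta E g b lo hi v"
    then obtain f where x: "x = bus_injection E f" and f: "\<forall>e\<in>E. f e \<in> flow_set g b lo hi v e"
      unfolding P_theta_def A_image_def by auto
    have "\<forall>e\<in>E. f e \<in> conv_flow_set g b lo hi v e"
      using f sub_flow[OF _ _ _ pos] ne ang by blast
    thus "x \<in> conv_P_theta E g b lo hi v" unfolding conv_P_theta_def A_image_def x by blast
  qed
  have dom: "\<forall>y\<in>conv_P_theta E g b lo hi v. \<exists>z\<in>P_theta E g b lo hi v. \<forall>i. z $ i \<le> y $ i"
  proof
    fix y assume "y \<in> conv_P_theta E g b lo hi v"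
    then obtain f where y: "y = bus_injection E f" and f: "\<forall>e\<in>E. f e \<in> conv_flow_set g b lo hi v e"
      unfolding conv_P_theta_def A_image_def by auto
    have "\<forall>e\<in>E. \<exists>q. q \<in> flow_set g b lo hi v e \<and> fst q \<le> fst (f e) \<and> snd q \<le> snd (f e)"
    proof
      fix e assume e: "e \<in> E"
      show "\<exists>q. q \<in> flow_set g b lo hi v e \<and> fst q \<le> fst (f e) \<and> snd q \<le> snd (f e)"
        using dom_flow[of g e lo hi v "f e" b] adm ang e f pos by blast
    qed
    then obtain f' where f': "\<forall>e\<in>E. f' e \<in> flow_set g b lo hi v e \<and> fst (f' e) \<le> fst (f e) \<and> snd (f' e) \<le> snd (f e)"
      by (metis bchoice)
    show "\<exists>z\<in>P_theta E g b lo hi v. \<forall>i. z $ i \<le> y $ i"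
    proof (rule bexI[of _ "bus_injection E f'"])
      show "bus_injection E f' \<in> P_theta E g b lo hi v" unfolding P_theta_def A_image_def using f' by blast
      show "\<forall>i. bus_injection E f' $ i \<le> y $ i" unfolding y using f' by (intro allI bus_mono) blast
    qed
  qed
  show "pareto (P_theta E g b lo hi v) = pareto (conv_P_theta E g b lo hi v)"
    by (rule pareto_eq[OF sub dom])
  show "pareto (P_set E g b lo hi Pbar v) = pareto (conv_P_theta E g b lo hi v \<inter> P_P Pbar)"
    unfolding P_set_def
  proof (rule pareto_eq)
    show "P_theta E g b lo hi v \<inter> P_P Pbar \<subseteq> conv_P_theta E g b lo hi v \<inter> P_P Pbar" using sub by blast
    show "\<forall>y\<in>conv_P_theta E g b lo hi v \<inter> P_P Pbar. \<exists>z\<in>P_theta E g b lo hi v \<inter> P_P Pbar. \<forall>i. z $ i \<le> y $ i"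
    proof
      fix y assume y: "y \<in> conv_P_theta E g b lo hi v \<inter> P_P Pbar"
      then obtain z where z: "z \<in> P_theta E g b lo hi v" "\<forall>i. z $ i \<le> y $ i" using dom by blast
      have "z \<in> P_P Pbar" using y z(2) unfolding P_P_def by (auto intro: order_trans)
      thus "\<exists>z\<in>P_theta E g b lo hi v \<inter> P_P Pbar. \<forall>i. z $ i \<le> y $ i" using z by blast
    qed
  qed
next
  fix vlo vhi :: "real^'v" assume box: "\<forall>i. 0 < vlo $ i \<and> vlo $ i \<le> vhi $ i"
  show "convex (\<Union>v \<in> {v. \<forall>i. vlo $ i \<le> v $ i \<and> v $ i \<le> vhi $ i}. conv_P_theta E g b lo hi v)"
  proof (rule convexI)
    fix x y :: "real^'v" and a c :: real
    assume x: "x \<in> (\<Union>v \<in> {v. \<forall>i. vlo $ i \<le> v $ i \<and> v $ i \<le> vhi $ i}. conv_P_theta E g b lo hi v)"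
      and y: "y \<in> (\<Union>v \<in> {v. \<forall>i. vlo $ i \<le> v $ i \<and> v $ i \<le> vhi $ i}. conv_P_theta E g b lo hi v)"
      and a: "0 \<le> a" and c: "0 \<le> c" and ac: "a + c = 1"
    show "a *\<^sub>R x + c *\<^sub>R y \<in> (\<Union>v \<in> {v. \<forall>i. vlo $ i \<le> v $ i \<and> v $ i \<le> vhi $ i}. conv_P_theta E g b lo hi v)"
    proof -
    from x obtain v1 where v1: "\<forall>i. vlo $ i \<le> v1 $ i \<and> v1 $ i \<le> vhi $ i"
      and x1: "x \<in> conv_P_theta E g b lo hi v1" by blast
    from y obtain v2 where v2: "\<forall>i. vlo $ i \<le> v2 $ i \<and> v2 $ i \<le> vhi $ i"
      and y2: "y \<in> conv_P_theta E g b lo hi v2" by blast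
    from x1 obtain f1 where xf: "x = bus_injection E f1" and f1: "\<forall>e\<in>E. f1 e \<in> conv_flow_set g b lo hi v1 e"
      unfolding conv_P_theta_def A_image_def by auto
    from y2 obtain f2 where yf: "y = bus_injection E f2" and f2: "\<forall>e\<in>E. f2 e \<in> conv_flow_set g b lo hi v2 e"
      unfolding conv_P_theta_def A_image_def by auto
    define Y where "Y e = cnj (Complex (g e) (- b e))" for e
    define FL where "FL W e = (Re ((W $ fst e $ fst e - W $ fst e $ snd e) * Y e),
                                Re ((W $ snd e $ snd e - W $ snd e $ fst e) * Y e))" for W :: "complex^'v^'v" and e
    have cfs: "conv_flow_set g b lo hi u e = {FL W e | W. W \<in> H_set (lo e) (hi e) u (fst e) (snd e)}" for u e
      unfolding conv_flow_set_def Let_def FL_def Y_def by simp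
    have "\<forall>e\<in>E. \<exists>W. W \<in> H_set (lo e) (hi e) v1 (fst e) (snd e) \<and> f1 e = FL W e"
      using f1 unfolding cfs by blast
    then obtain W1 where W1: "\<forall>e\<in>E. W1 e \<in> H_set (lo e) (hi e) v1 (fst e) (snd e) \<and> f1 e = FL (W1 e) e"
      by (metis bchoice)
    have "\<forall>e\<in>E. \<exists>W. W \<in> H_set (lo e) (hi e) v2 (fst e) (snd e) \<and> f2 e = FL W e"
      using f2 unfolding cfs by blast
    then obtain W2 where W2: "\<forall>e\<in>E. W2 e \<in> H_set (lo e) (hi e) v2 (fst e) (snd e) \<and> f2 e = FL (W2 e) e"
      by (metis bchoice)
    define vn :: "real^'v" where "vn = (\<chi> i. sqrt (a * (v1 $ i)\<^sup>2 + c * (v2 $ i)\<^sup>2))"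
    have vnsq: "(vn $ i)\<^sup>2 = a * (v1 $ i)\<^sup>2 + c * (v2 $ i)\<^sup>2" for i
      unfolding vn_def using a c by simp
    have vnbox: "vlo $ i \<le> vn $ i \<and> vn $ i \<le> vhi $ i" for i
    proof
      have l0: "0 \<le> vlo $ i" using box less_imp_le by blast
      have "(vlo $ i)\<^sup>2 \<le> (v1 $ i)\<^sup>2" using v1 l0 by (intro power_mono) auto
      moreover have "(vlo $ i)\<^sup>2 \<le> (v2 $ i)\<^sup>2" using v2 l0 by (intro power_mono) auto
      ultimately have "a * (vlo $ i)\<^sup>2 + c * (vlo $ i)\<^sup>2 \<le> a * (v1 $ i)\<^sup>2 + c * (v2 $ i)\<^sup>2"
        using a c by (intro add_mono mult_left_mono) auto
      hence "(vlo $ i)\<^sup>2 \<le> a * (v1 $ i)\<^sup>2 + c * (v2 $ i)\<^sup>2" using ac by (simp add: algebra_simps flip: distrib_right)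
      thus "vlo $ i \<le> vn $ i" unfolding vn_def by (simp add: real_le_rsqrt)
      have "(v1 $ i)\<^sup>2 \<le> (vhi $ i)\<^sup>2" using v1 l0 by (intro power_mono) (auto intro: order_trans)
      moreover have "(v2 $ i)\<^sup>2 \<le> (vhi $ i)\<^sup>2" using v2 l0 by (intro power_mono) (auto intro: order_trans)
      ultimately have "a * (v1 $ i)\<^sup>2 + c * (v2 $ i)\<^sup>2 \<le> a * (vhi $ i)\<^sup>2 + c * (vhi $ i)\<^sup>2"
        using a c by (intro add_mono mult_left_mono) auto
      hence "a * (v1 $ i)\<^sup>2 + c * (v2 $ i)\<^sup>2 \<le> (vhi $ i)\<^sup>2" using ac by (simp add: algebra_simps flip: distrib_right)
      hence "sqrt (a * (v1 $ i)\<^sup>2 + c * (v2 $ i)\<^sup>2) \<le> sqrt ((vhi $ i)\<^sup>2)" by (rule real_sqrt_le_mono)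
      moreover have "0 \<le> vhi $ i" using box l0 order_trans by blast
      ultimately show "vn $ i \<le> vhi $ i" unfolding vn_def by simp
    qed
    define f where "f e = (a * fst (f1 e) + c * fst (f2 e), a * snd (f1 e) + c * snd (f2 e))" for e
    have fin: "\<forall>e\<in>E. f e \<in> conv_flow_set g b lo hi vn e"
    proof
      fix e assume e: "e \<in> E"
      define W where "W = (\<chi> p q. of_real a * W1 e $ p $ q + of_real c * W2 e $ p $ q)"
      have hc: "W \<in> H_set (lo e) (hi e) vn (fst e) (snd e)"
        "Re ((W $ fst e $ fst e - W $ fst e $ snd e) * Y e) = a * Re ((W1 e $ fst e $ fst e - W1 e $ fst e $ snd e) * Y e) + c * Re ((W2 e $ fst e $ fst e - W2 e $ fst e $ snd e) * Y e)"
        "Re ((W $ snd e $ snd e - W $ snd e $ fst e) * Y e) = a * Re ((W1 e $ snd e $ snd e - W1 e $ snd e $ fst e) * Y e) + c * Re ((W2 e $ snd e $ snd e - W2 e $ snd e $ fst e) * Y e)"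
        using H_comb(1)[OF conjunct1[OF W1[rule_format, OF e]] conjunct1[OF W2[rule_format, OF e]] a c vnsq vnsq]
          H_comb(2)[OF conjunct1[OF W1[rule_format, OF e]] conjunct1[OF W2[rule_format, OF e]] a c vnsq vnsq, of "Y e"]
          H_comb(3)[OF conjunct1[OF W1[rule_format, OF e]] conjunct1[OF W2[rule_format, OF e]] a c vnsq vnsq, of "Y e"]
        unfolding W_def by blast+
      have "f e = FL W e" unfolding f_def FL_def hc(2,3) using W1 W2 e by (simp add: FL_def)
      thus "f e \<in> conv_flow_set g b lo hi vn e" unfolding cfs using hc(1) by blast
    qed
    have eq: "a *\<^sub>R x + c *\<^sub>R y = bus_injection E f"
    proof -
      have "(a *\<^sub>R x + c *\<^sub>R y) $ i = bus_injection E f $ i" for i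
      proof -
        have h: "\<And>P (u::real) w. (if P then a * u + c * w else 0) = a * (if P then u else 0) + c * (if P then w else 0)"
          by simp
        show ?thesis
          unfolding xf yf bus_injection_def f_def fst_conv snd_conv h sum.distrib sum_distrib_left[symmetric]
          by (simp add: algebra_simps)
      qed
      thus ?thesis by (simp add: vec_eq_iff)
    qed
    have "a *\<^sub>R x + c *\<^sub>R y \<in> conv_P_theta E g b lo hi vn"
      unfolding eq conv_P_theta_def A_image_def using fin by blast
    thus "a *\<^sub>R x + c *\<^sub>R y \<in> (\<Union>v \<in> {v. \<forall>i. vlo $ i \<le> v $ i \<and> v $ i \<le> vhi $ i}. conv_P_theta E g b lo hi v)"
      using vnbox by blast
    qed
  qed
qed


end
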